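(* For any sequence $1>r_1>r_2>\cdots$ decreasing to $0$, there is a distribution $\boldsymbol{\mu}\in\Delta_\mathbb{N}$ such that $2\,\mathbb{E}_{\boldsymbol{X}\sim\boldsymbol{\mu}^m}\|\boldsymbol{\mu}-\widehat{\boldsymbol{\mu}}_m\|_{TV}>r_m$ for all $m\ge1$.
   Context: $\Delta_\mathbb{N}$ is the set of probability distributions on $\mathbb{N}=\{1,2,\dots\}$. $\widehat{\boldsymbol{\mu}}_m(i)=\frac1m\sum_{t=1}^m\mathbb{I}\{X_t=i\}$ for $\boldsymbol{X}=(X_1,\dots,X_m)$. $\|\boldsymbol{\mu}-\boldsymbol{\nu}\|_{TV}=\frac12\sum_i|\boldsymbol{\mu}(i)-\boldsymbol{\nu}(i)|$. *)

theory Defs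
  imports "HOL-Probability.Probability"
begin

definition emp_dist :: "nat \<Rightarrow> (nat \<Rightarrow> nat) \<Rightarrow> nat \<Rightarrow> real" where
  "emp_dist m X i = (1 / real m) * real (card {t \<in> {1..m}. X t = i})"

definition tv_dist :: "nat pmf \<Rightarrow> (nat \<Rightarrow> real) \<Rightarrow> real" where
  "tv_dist \<mu> \<nu> = (1/2) * (\<Sum>\<^sub>\<infinity>i\<in>{1::nat..}. \<bar>pmf \<mu> i - \<nu> i\<bar>)"

text \<open>m i.i.d. samples from mu, as a pmf on functions {1..m} -> N (value 0 outside).\<close>
definition sample_pmf :: "nat pmf \<Rightarrow> nat \<Rightarrow> (nat \<Rightarrow> nat) pmf" where
  "sample_pmf \<mu> m = Pi_pmf {1..m} 0 (\<lambda>_. \<mu>)"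

end

theory Submission
  imports Defs
begin

lemma pmf_summable_on: "pmf p summable_on A"
proof -
  have "(\<lambda>x. norm (pmf p x)) summable_on A"
    using abs_summable_equivalent[of "pmf p" A] pmf_abs_summable by blast
  then show ?thesis by simp
qed

lemma pmf_infsum_le: "infsum (pmf p) A \<le> 1"
proof -
  have "infsum (pmf p) A = infsetsum (pmf p) A"
    by (rule infsetsum_infsum[symmetric]) (rule pmf_abs_summable)
  also have "\<dots> = measure p A" by (simp add: measure_pmf_conv_infsetsum)
  also have "\<dots> \<le> 1" by simp
  finally show ?thesis .
qed

lemma emp_nonneg: "emp_dist m X i \<ge> 0" by (simp add: emp_dist_def)

lemma emp_le1: "emp_dist m X i \<le> 1"
proof (cases "m = 0")
  case True then show ?thesis by (simp add: emp_dist_def)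
next
  case False
  have "card {t \<in> {1..m}. X t = i} \<le> card {1..m}" by (intro card_mono) auto
  then have "real (card {t \<in> {1..m}. X t = i}) \<le> real m" by simp
  then show ?thesis using False by (simp add: emp_dist_def field_simps)
qed

lemma emp_zero: "i \<notin> X ` {1..m} \<Longrightarrow> emp_dist m X i = 0"
  by (auto simp: emp_dist_def)

lemma emp_summable: "emp_dist m X summable_on A"
proof -
  have "emp_dist m X summable_on A \<longleftrightarrow> emp_dist m X summable_on (A \<inter> X ` {1..m})"
    by (intro summable_on_cong_neutral) (auto simp: emp_zero)
  then show ?thesis by simp
qed

lemma emp_infsum_le: "infsum (emp_dist m X) A \<le> real m"
proof -
  have "infsum (emp_dist m X) A = infsum (emp_dist m X) (A \<inter> X ` {1..m})"
    by (intro infsum_cong_neutral) (auto simp: emp_zero)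
  also have "\<dots> = sum (emp_dist m X) (A \<inter> X ` {1..m})" by simp
  also have "\<dots> \<le> sum (\<lambda>_. 1) (A \<inter> X ` {1..m})"
    by (intro sum_mono emp_le1)
  also have "\<dots> = real (card (A \<inter> X ` {1..m}))" by simp
  also have "card (A \<inter> X ` {1..m}) \<le> card (X ` {1..m})" by (intro card_mono) auto
  also have "card (X ` {1..m}) \<le> m" using card_image_le[of "{1..m}" X] by simp
  finally show ?thesis by simp
qed

lemma absdiff_summable: "(\<lambda>i. \<bar>pmf p i - emp_dist m X i\<bar>) summable_on A"
proof (rule summable_on_comparison_test)
  show "(\<lambda>i. pmf p i + emp_dist m X i) summable_on A"
    by (intro summable_on_add pmf_summable_on emp_summable)
  show "\<And>i. \<bar>pmf p i - emp_dist m X i\<bar> \<le> pmf p i + emp_dist m X i"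
    using emp_nonneg by (simp add: abs_le_iff pmf_nonneg)
qed simp

lemma tv_nonneg: "tv_dist p (emp_dist m X) \<ge> 0"
  unfolding tv_dist_def by (intro mult_nonneg_nonneg infsum_nonneg) auto

lemma tv_le: "tv_dist p (emp_dist m X) \<le> (1 + real m) / 2"
proof -
  have "infsum (\<lambda>i. \<bar>pmf p i - emp_dist m X i\<bar>) {1..} \<le> infsum (\<lambda>i. pmf p i + emp_dist m X i) {1..}"
    by (intro infsum_mono absdiff_summable summable_on_add pmf_summable_on emp_summable)
       (smt (verit) pmf_nonneg emp_nonneg)
  also have "\<dots> = infsum (pmf p) {1..} + infsum (emp_dist m X) {1..}"
    by (intro infsum_add pmf_summable_on emp_summable)
  also have "\<dots> \<le> 1 + real m" using pmf_infsum_le emp_infsum_le by (intro add_mono)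
  finally show ?thesis unfolding tv_dist_def by simp
qed

lemma tv_lower:
  assumes "finite F" "F \<subseteq> {1..}"
  shows "(\<Sum>i\<in>F. pmf p i * indicator {X. \<forall>t\<in>{1..m}. X t \<noteq> i} X) \<le> 2 * tv_dist p (emp_dist m X)"
proof -
  have "(\<Sum>i\<in>F. pmf p i * indicator {X. \<forall>t\<in>{1..m}. X t \<noteq> i} X) \<le> (\<Sum>i\<in>F. \<bar>pmf p i - emp_dist m X i\<bar>)"
  proof (intro sum_mono)
    fix i assume "i \<in> F"
    show "pmf p i * indicator {X. \<forall>t\<in>{1..m}. X t \<noteq> i} X \<le> \<bar>pmf p i - emp_dist m X i\<bar>"
    proof (cases "\<forall>t\<in>{1..m}. X t \<noteq> i")
      case True
      then have "emp_dist m X i = 0" by (intro emp_zero) auto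
      then show ?thesis using True by simp
    next
      case False then show ?thesis by simp
    qed
  qed
  also have "\<dots> = infsum (\<lambda>i. \<bar>pmf p i - emp_dist m X i\<bar>) F" using assms by simp
  also have "\<dots> \<le> infsum (\<lambda>i. \<bar>pmf p i - emp_dist m X i\<bar>) {1..}"
    using assms by (intro infsum_mono_neutral absdiff_summable) auto
  finally show ?thesis unfolding tv_dist_def by simp
qed


lemma prob_avoid: "measure_pmf.prob (sample_pmf p m) {X. \<forall>t\<in>{1..m}. X t \<noteq> i} = (1 - pmf p i) ^ m"
proof -
  have "{X. \<forall>t\<in>{1..m}. X t \<noteq> i} = Pi {1..m} (\<lambda>_. UNIV - {i})" by (auto simp: Pi_def)
  then have "measure_pmf.prob (sample_pmf p m) {X. \<forall>t\<in>{1..m}. X t \<noteq> i}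
      = (\<Prod>x\<in>{1..m}. measure_pmf.prob p (UNIV - {i}))"
    unfolding sample_pmf_def by (simp add: measure_Pi_pmf_Pi)
  also have "measure_pmf.prob p (UNIV - {i}) = 1 - pmf p i"
    using measure_pmf.prob_compl[of "{i}" p] by (simp add: measure_pmf_single)
  finally show ?thesis by simp
qed

lemma integrable_ind_pmf[simp]: "integrable (measure_pmf M) (indicator A :: _ \<Rightarrow> real)"
  by (intro integrable_real_indicator) (auto simp: measure_pmf.emeasure_finite less_top[symmetric])

lemma exp_lower:
  assumes "finite F" "F \<subseteq> {1..}"
  shows "(\<Sum>i\<in>F. pmf p i * (1 - pmf p i) ^ m)
     \<le> 2 * measure_pmf.expectation (sample_pmf p m) (\<lambda>X. tv_dist p (emp_dist m X))"
proof -
  let ?S = "sample_pmf p m"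
  let ?E = "\<lambda>i. {X. \<forall>t\<in>{1..m}. X t \<noteq> i}"
  have int: "integrable (measure_pmf ?S) (\<lambda>X. tv_dist p (emp_dist m X))"
    by (rule measure_pmf.integrable_const_bound[where B = "(1 + real m)/2"])
       (use tv_le tv_nonneg in \<open>auto simp: abs_of_nonneg\<close>)
  have int2: "integrable (measure_pmf ?S) (\<lambda>X. \<Sum>i\<in>F. pmf p i * indicator (?E i) X)"
    by (intro Bochner_Integration.integrable_sum integrable_mult_right integrable_real_indicator) (auto simp: measure_pmf.emeasure_finite less_top[symmetric])
  have "(\<Sum>i\<in>F. pmf p i * (1 - pmf p i) ^ m) = (\<Sum>i\<in>F. pmf p i * measure_pmf.prob ?S (?E i))"
    by (intro sum.cong refl) (simp only: prob_avoid)
  also have "\<dots> = measure_pmf.expectation ?S (\<lambda>X. \<Sum>i\<in>F. pmf p i * indicator (?E i) X)"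
    by (subst Bochner_Integration.integral_sum) (auto simp del: indicator_simps)
  also have "\<dots> \<le> measure_pmf.expectation ?S (\<lambda>X. 2 * tv_dist p (emp_dist m X))"
    by (intro integral_mono int2 integrable_mult_right int tv_lower assms)
  also have "\<dots> = 2 * measure_pmf.expectation ?S (\<lambda>X. tv_dist p (emp_dist m X))"
    by simp
  finally show ?thesis .
qed


definition hh :: "nat \<times> nat \<Rightarrow> nat" where "hh x = Suc (prod_encode x)"

lemma inj_hh: "inj hh"
  unfolding hh_def by (intro injI) (simp add: prod_encode_eq)

definition nu :: "(nat \<Rightarrow> nat) \<Rightarrow> (nat \<times> nat) pmf" where
  "nu N = bind_pmf (geometric_pmf (1/2)) (\<lambda>k. map_pmf (Pair k) (pmf_of_set {..<N k}))"

definition mu :: "(nat \<Rightarrow> nat) \<Rightarrow> nat pmf" where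
  "mu N = map_pmf hh (nu N)"

lemma pmf_nu:
  assumes "N k > 0" "j < N k"
  shows "pmf (nu N) (k, j) = (1/2) ^ Suc k / real (N k)"
proof -
  have "pmf (nu N) (k, j) = measure_pmf.expectation (geometric_pmf (1/2))
          (\<lambda>y. pmf (map_pmf (Pair y) (pmf_of_set {..<N y})) (k, j))"
    unfolding nu_def by (rule pmf_bind)
  also have "(\<lambda>y. pmf (map_pmf (Pair y) (pmf_of_set {..<N y})) (k, j))
      = (\<lambda>y. (1 / real (N k)) * indicator {k} y)"
  proof
    fix y
    show "pmf (map_pmf (Pair y) (pmf_of_set {..<N y})) (k, j) = (1 / real (N k)) * indicator {k} y"
    proof (cases "y = k")
      case True
      have "pmf (map_pmf (Pair y) (pmf_of_set {..<N y})) (Pair y j) = pmf (pmf_of_set {..<N y}) j"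
        by (intro pmf_map_inj') (auto intro: injI)
      moreover have "pmf (pmf_of_set {..<N k}) j = 1 / real (N k)"
        using assms by (subst pmf_of_set) auto
      ultimately show ?thesis using True by simp
    next
      case False
      then have "(k, j) \<notin> Pair y ` set_pmf (pmf_of_set {..<N y})" by auto
      then show ?thesis using False by (simp add: pmf_map_outside)
    qed
  qed
  also have "measure_pmf.expectation (geometric_pmf (1/2)) (\<lambda>y. (1 / real (N k)) * indicator {k} y)
     = (1 / real (N k)) * pmf (geometric_pmf (1/2)) k"
    by (simp add: measure_pmf_single)
  also have "\<dots> = (1/2) ^ Suc k / real (N k)"
    by (simp add: pmf_geometric)
  finally show ?thesis .
qed

lemma pmf_mu:
  assumes "N k > 0" "j < N k"
  shows "pmf (mu N) (hh (k, j)) = (1/2) ^ Suc k / real (N k)"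
  unfolding mu_def using pmf_nu[of N k j, OF assms] by (simp add: pmf_map_inj' inj_hh)

lemma set_mu: "set_pmf (mu N) \<subseteq> {1..}"
  unfolding mu_def by (auto simp: hh_def)

lemma atom_bound:
  fixes w C :: real and n m :: nat
  assumes "0 \<le> w" "w \<le> 1" "n > 0" "C > 0" "C * real m \<le> real n"
  shows "w * (1 - 1/C) \<le> real n * ((w / n) * (1 - w / n) ^ m)"
proof -
  have p0: "0 \<le> w / n" "w / n \<le> 1" using assms by (auto simp: field_simps)
  have "1 + real m * (- (w / n)) \<le> (1 + (- (w/n))) ^ m"
    by (rule Bernoulli_inequality) (use p0 in auto)
  then have B: "1 - real m * (w / n) \<le> (1 - w/n) ^ m" by simp
  have "real m * (w / n) \<le> 1 / C"
  proof -
    have "real m * (w / n) \<le> real m * (1 / n)" using assms by (intro mult_left_mono divide_right_mono) auto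
    also have "\<dots> = real m / n" by simp
    also have "\<dots> \<le> 1 / C" using assms by (auto simp: field_simps)
    finally show ?thesis .
  qed
  then have "1 - 1/C \<le> (1 - w/n) ^ m" using B by linarith
  then have "w * (1 - 1/C) \<le> w * (1 - w/n) ^ m" using assms by (intro mult_left_mono) auto
  also have "\<dots> = real n * ((w / n) * (1 - w / n) ^ m)" using assms by (simp add: field_simps)
  finally show ?thesis .
qed

lemma block_sum:
  fixes C :: real
  assumes Npos: "\<And>k. N k > 0" and Ks: "finite Ks" and C: "C > 0"
    and big: "\<And>k. k \<in> Ks \<Longrightarrow> C * real m \<le> real (N k)"
  shows "(1 - 1/C) * (\<Sum>k\<in>Ks. (1/2) ^ Suc k)
     \<le> (\<Sum>i\<in>hh ` (SIGMA k:Ks. {..<N k}). pmf (mu N) i * (1 - pmf (mu N) i) ^ m)"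
proof -
  have "(\<Sum>i\<in>hh ` (SIGMA k:Ks. {..<N k}). pmf (mu N) i * (1 - pmf (mu N) i) ^ m)
      = (\<Sum>x\<in>(SIGMA k:Ks. {..<N k}). pmf (mu N) (hh x) * (1 - pmf (mu N) (hh x)) ^ m)"
    by (intro sum.reindex[unfolded comp_def]) (auto intro: inj_on_subset[OF inj_hh])
  also have "\<dots> = (\<Sum>k\<in>Ks. \<Sum>j\<in>{..<N k}. pmf (mu N) (hh (k,j)) * (1 - pmf (mu N) (hh (k,j))) ^ m)"
    using Ks by (subst sum.Sigma) auto
  also have "\<dots> = (\<Sum>k\<in>Ks. real (N k) * (((1/2) ^ Suc k / real (N k)) * (1 - (1/2) ^ Suc k / real (N k)) ^ m))"
    using Npos by (intro sum.cong refl) (simp add: pmf_mu)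
  finally have eq: "(\<Sum>i\<in>hh ` (SIGMA k:Ks. {..<N k}). pmf (mu N) i * (1 - pmf (mu N) i) ^ m) = \<dots>" .
  have "(1 - 1/C) * (\<Sum>k\<in>Ks. (1/2) ^ Suc k) = (\<Sum>k\<in>Ks. (1/2) ^ Suc k * (1 - 1/C))"
    by (simp add: sum_distrib_left mult.commute)
  also have "\<dots> \<le> (\<Sum>k\<in>Ks. real (N k) * (((1/2) ^ Suc k / real (N k)) * (1 - (1/2) ^ Suc k / real (N k)) ^ m))"
  proof (intro sum_mono atom_bound)
    fix k assume "k \<in> Ks"
    show "(0::real) \<le> (1/2) ^ Suc k" by simp
    show "((1::real)/2) ^ Suc k \<le> 1" by (intro power_le_one) auto
    show "N k > 0" by (rule Npos)
    show "C > 0" by (rule C)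
    show "C * real m \<le> real (N k)" using big \<open>k \<in> Ks\<close> by blast
  qed
  finally show ?thesis using eq by simp
qed


lemma geo_block: "(\<Sum>k\<in>{K..K+L}. ((1::real)/2) ^ Suc k) = (1/2)^K * (1 - (1/2) ^ Suc L)"
proof (induction L)
  case 0 then show ?case by simp
next
  case (Suc L)
  have "{K..K + Suc L} = insert (Suc (K + L)) {K..K+L}" by auto
  then have "(\<Sum>k\<in>{K..K+Suc L}. ((1::real)/2) ^ Suc k) = (1/2) ^ Suc (Suc (K+L)) + (\<Sum>k\<in>{K..K+L}. ((1::real)/2) ^ Suc k)"
    by simp
  also have "\<dots> = (1/2)^K * (1 - (1/2) ^ Suc (Suc L))" using Suc by (simp add: power_add field_simps)
  finally show ?case .
qed

theorem proposition2:
  fixes r :: "nat \<Rightarrow> real"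
  assumes "r 1 < 1"
    and "\<And>m. m \<ge> 1 \<Longrightarrow> r (Suc m) < r m"
    and "r \<longlonglongrightarrow> 0"
  shows "\<exists>\<mu> :: nat pmf. set_pmf \<mu> \<subseteq> {1..} \<and>
           (\<forall>m \<ge> 1. 2 * measure_pmf.expectation (sample_pmf \<mu> m)
                          (\<lambda>X. tv_dist \<mu> (emp_dist m X)) > r m)"
proof -
  note r1 = assms(1) and dec = assms(2) and lim = assms(3)
  have mono: "r n \<le> r m" if "1 \<le> m" "m \<le> n" for m n
    using that(2,1)
  proof (induction n rule: dec_induct)
    case base then show ?case by simp
  next
    case (step n) then show ?case using dec[of n] by simp
  qed
  have rpos: "r m > 0" if "m \<ge> 1" for m
  proof -
    have "0 \<le> r (Suc m)"
      by (rule LIMSEQ_le_const2[OF lim]) (use mono that in \<open>auto intro!: exI[of _ "Suc m"]\<close>)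
    then show ?thesis using dec[OF that] by simp
  qed
  obtain n0 where n0: "((1::real)/2) ^ n0 < (1 - r 1) / 2"
    using real_arch_pow_inv[of "(1 - r 1)/2" "1/2"] r1 by auto
  define a :: real where "a = (1/2) ^ n0"
  define C :: real where "C = 2 ^ n0"
  define L where "L = n0"
  have Cpos: "C > 0" unfolding C_def by simp
  have invC: "1 / C = a" unfolding C_def a_def by (simp add: power_divide)
  have a0: "0 \<le> a" unfolding a_def by simp
  define \<theta> where "\<theta> = (1 - 1/C) * (1 - (1/2) ^ Suc L)"
  have h2: "((1::real)/2)^Suc L = a/2" by (simp add: a_def L_def)
  have th_eq: "\<theta> = (1 - a) * (1 - a/2)" unfolding \<theta>_def invC h2 ..
  have th_gt: "\<theta> > r 1"
  proof -
    have "(1 - a) * (1 - a/2) = 1 - 3/2*a + a*a/2" by (simp add: field_simps)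
    moreover have "a*a \<ge> 0" using a0 by simp
    ultimately have "\<theta> \<ge> 1 - 2 * a" using th_eq a0 by linarith
    moreover have "2 * a < 1 - r 1" using n0 a_def by simp
    ultimately show ?thesis by linarith
  qed
  have a1: "a \<le> 1" unfolding a_def by (intro power_le_one) auto
  have th_le1: "\<theta> \<le> 1" unfolding th_eq using a0 a1 by (intro mult_le_one) auto
  have th_pos: "\<theta> > 0" using th_gt rpos[of 1] by simp
  define thr where "thr K = \<theta> * (1/2) ^ K" for K :: nat
  have thr_pos: "thr K > 0" for K unfolding thr_def using th_pos by simp
  have thr_anti: "thr K' \<le> thr K" if "K \<le> K'" for K K'
    unfolding thr_def using th_pos that by (intro mult_left_mono power_decreasing) auto
  define P where "P K m \<longleftrightarrow> (\<forall>n\<ge>m. n \<ge> 1 \<longrightarrow> r n < thr K)" for K m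
  have Pex: "\<exists>m. P K m" for K
  proof -
    have "eventually (\<lambda>n. r n < thr K) sequentially"
      using lim thr_pos[of K] by (rule order_tendstoD(2))
    then obtain N0 where "\<forall>n\<ge>N0. r n < thr K" by (auto simp: eventually_sequentially)
    then show ?thesis unfolding P_def by blast
  qed
  define M where "M K = (LEAST m. P K m)" for K
  have PM: "P K (M K)" for K unfolding M_def using Pex[of K] by (rule LeastI_ex)
  have Pup: "P K m'" if "P K m" "m \<le> m'" for K m m' using that unfolding P_def by auto
  have Panti: "P K m" if "P K' m" "K \<le> K'" for K K' m
    unfolding P_def
  proof (intro allI impI)
    fix n assume "m \<le> n" "1 \<le> n"
    then have "r n < thr K'" using that(1) unfolding P_def by blast
    then show "r n < thr K" using thr_anti[OF that(2)] by linarith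
  qed
  have Mmono: "M K \<le> M K'" if "K \<le> K'" for K K'
    unfolding M_def by (rule Least_le) (rule Panti[OF PM[of K'] that, unfolded M_def])
  have P0: "P 0 m" for m
    unfolding P_def thr_def
  proof (intro allI impI)
    fix n assume "m \<le> n" "1 \<le> n"
    then have "r n \<le> r 1" using mono[of 1 n] by simp
    then show "r n < \<theta> * (1/2)^0" using th_gt by simp
  qed
  define N where "N k = 2 ^ n0 * M (Suc k) + 1" for k
  have Npos: "N k > 0" for k unfolding N_def by simp
  have NC: "C * real (M (Suc k)) \<le> real (N k)" for k
    unfolding N_def C_def by simp
  define \<mu> where "\<mu> = mu N"
  have main: "2 * measure_pmf.expectation (sample_pmf \<mu> m) (\<lambda>X. tv_dist \<mu> (emp_dist m X)) > r m"
    if m1: "m \<ge> 1" for m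
  proof -
    obtain k1 where k1: "((1::real)/2) ^ k1 < r m"
      using real_arch_pow_inv[of "r m" "1/2"] rpos[OF m1] by auto
    have "thr (Suc k1) \<le> r m"
    proof -
      have "thr (Suc k1) \<le> (1/2) ^ Suc k1"
        unfolding thr_def using th_pos th_le1
        by (intro mult_left_le_one_le) auto
      also have "\<dots> \<le> (1/2) ^ k1" by (intro power_decreasing) auto
      finally show ?thesis using k1 by simp
    qed
    then have "\<not> P (Suc k1) m" unfolding P_def using m1 by auto
    then have ex: "M (Suc k1) > m" using Pup[OF PM[of "Suc k1"]] by (meson not_le)
    define K where "K = (LEAST k. M (Suc k) > m)"
    have MK: "M (Suc K) > m" unfolding K_def using ex by (rule LeastI)
    have PK: "P K m"
    proof (cases K)
      case 0 then show ?thesis using P0 by simp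
    next
      case (Suc K')
      then have "\<not> M (Suc K') > m" unfolding K_def
        by (metis K_def Suc lessI not_less_Least)
      then have "M (Suc K') \<le> m" by simp
      then show ?thesis using Pup[OF PM[of "Suc K'"]] Suc by simp
    qed
    then have rK: "r m < thr K" unfolding P_def using m1 by simp
    let ?Ks = "{K..K+L}"
    let ?F = "hh ` (SIGMA k:?Ks. {..<N k})"
    have big: "C * real m \<le> real (N k)" if "k \<in> ?Ks" for k
    proof -
      have "m \<le> M (Suc k)" using MK Mmono[of "Suc K" "Suc k"] that by simp
      then have "C * real m \<le> C * real (M (Suc k))" using Cpos by simp
      then show ?thesis using NC[of k] by linarith
    qed
    have "thr K = (1 - 1/C) * (\<Sum>k\<in>?Ks. (1/2) ^ Suc k)"
      unfolding thr_def \<theta>_def geo_block by simp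
    also have "\<dots> \<le> (\<Sum>i\<in>?F. pmf (mu N) i * (1 - pmf (mu N) i) ^ m)"
      by (rule block_sum[OF Npos _ Cpos big]) auto
    also have "\<dots> \<le> 2 * measure_pmf.expectation (sample_pmf \<mu> m) (\<lambda>X. tv_dist \<mu> (emp_dist m X))"
      unfolding \<mu>_def by (rule exp_lower) (auto simp: hh_def)
    finally show ?thesis using rK by simp
  qed
  show ?thesis
    by (rule exI[of _ \<mu>]) (use main set_mu in \<open>auto simp: \<mu>_def\<close>)
qed

end
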